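(* Let $\Sigma$ be a finite set of tokens, $c$ a context, $M_1,M_2$ language models, and $f$ a min-bounded function. Then $$\overline{f_c}(M_1,M_2)\le\sqrt{MAE_c(M_1,M_2)}.$$
   Context: Let $n=|\Sigma|$. A context is a finite sequence of tokens from $\Sigma$. A language model $M$ assigns to every context $c$ and token $t\in\Sigma$ a probability $p_M(t\mid c)>0$, with $\sum_{t\in\Sigma}p_M(t\mid c)=1$. For $g:\Sigma\to\mathbb{R}_{>0}$, $GM(g(t)):=\exp\big(\tfrac1n\sum_{t\in\Sigma}\log g(t)\big)$. Typical probability: $tp_c(M):=GM(p_M(t\mid c))$; relative probability: $rp_M(t\mid c):=p_M(t\mid c)/tp_c(M)$. A function $f:\mathbb{R}_{>0}^2\to\mathbb{R}_{>0}$ is proper-avg if $\min(x,y)\le f(x,y)\le\max(x,y)$ for all $x,y>0$; it is min-bounded if it is proper-avg and there is a constant $\lambda_f$ with $f(x,y)\le\lambda_f\min(x,y)$ for all $x,y>0$. For such $f$, set $M(t\mid c):=f(rp_{M_1}(t\mid c),rp_{M_2}(t\mid c))$ and define $\overline{f_c}(M_1,M_2):=GM\big(M(t\mid c)^{-1}\big)$. The mean absolute exposure is $MAE_c(M_1,M_2):=GM\Big(\max\Big(\tfrac{rp_{M_1}(t\mid c)}{rp_{M_2}(t\mid c)},\tfrac{rp_{M_2}(t\mid c)}{rp_{M_1}(t\mid c)}\Big)\Big)$. *)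

theory Defs
  imports Complex_Main
begin

text \<open>The token set Sigma is the (finite) universe of the type 'a; n = CARD('a).
  A context is a list of tokens; a language model maps a context and a token to a probability.\<close>

definition GM :: "('a::finite \<Rightarrow> real) \<Rightarrow> real" where
  "GM g = exp ((\<Sum>t\<in>UNIV. ln (g t)) / real (card (UNIV :: 'a set)))"

definition is_LM :: "('a::finite list \<Rightarrow> 'a \<Rightarrow> real) \<Rightarrow> bool" where
  "is_LM M \<longleftrightarrow> (\<forall>c t. M c t > 0) \<and> (\<forall>c. (\<Sum>t\<in>UNIV. M c t) = 1)"

definition tp :: "'a::finite list \<Rightarrow> ('a list \<Rightarrow> 'a \<Rightarrow> real) \<Rightarrow> real" where
  "tp c M = GM (\<lambda>t. M c t)"

definition rp :: "('a::finite list \<Rightarrow> 'a \<Rightarrow> real) \<Rightarrow> 'a \<Rightarrow> 'a list \<Rightarrow> real" where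
  "rp M t c = M c t / tp c M"

definition proper_avg :: "(real \<Rightarrow> real \<Rightarrow> real) \<Rightarrow> bool" where
  "proper_avg f \<longleftrightarrow> (\<forall>x y. x > 0 \<longrightarrow> y > 0 \<longrightarrow> min x y \<le> f x y \<and> f x y \<le> max x y)"

definition min_bounded :: "(real \<Rightarrow> real \<Rightarrow> real) \<Rightarrow> bool" where
  "min_bounded f \<longleftrightarrow> proper_avg f \<and>
     (\<exists>lam. \<forall>x y. x > 0 \<longrightarrow> y > 0 \<longrightarrow> f x y \<le> lam * min x y)"

definition fbar :: "(real \<Rightarrow> real \<Rightarrow> real) \<Rightarrow> 'a::finite list \<Rightarrow>
    ('a list \<Rightarrow> 'a \<Rightarrow> real) \<Rightarrow> ('a list \<Rightarrow> 'a \<Rightarrow> real) \<Rightarrow> real" where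
  "fbar f c M1 M2 = GM (\<lambda>t. inverse (f (rp M1 t c) (rp M2 t c)))"

definition MAE :: "'a::finite list \<Rightarrow> ('a list \<Rightarrow> 'a \<Rightarrow> real) \<Rightarrow> ('a list \<Rightarrow> 'a \<Rightarrow> real) \<Rightarrow> real" where
  "MAE c M1 M2 = GM (\<lambda>t. max (rp M1 t c / rp M2 t c) (rp M2 t c / rp M1 t c))"

end

theory Submission
  imports Defs
begin

lemma sum_ln_rp:
  fixes M :: "'a::finite list \<Rightarrow> 'a \<Rightarrow> real"
  assumes "is_LM M"
  shows "(\<Sum>t\<in>UNIV. ln (rp M t c)) = 0" and "\<And>t. rp M t c > 0"
proof -
  have pos: "\<And>t. M c t > 0" using assms unfolding is_LM_def by auto
  have n: "real (card (UNIV::'a set)) > 0" by (simp add: card_gt_0_iff)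
  have tpp: "tp c M > 0" unfolding tp_def GM_def by simp
  have ltp: "ln (tp c M) = (\<Sum>t\<in>UNIV. ln (M c t)) / real (card (UNIV::'a set))"
    unfolding tp_def GM_def by simp
  have "(\<Sum>t\<in>UNIV. ln (rp M t c)) = (\<Sum>t\<in>UNIV. ln (M c t) - ln (tp c M))"
    unfolding rp_def
  proof (rule sum.cong[OF refl])
    fix t
    show "ln (M c t / tp c M) = ln (M c t) - ln (tp c M)"
      using pos[of t] tpp by (simp add: ln_div)
  qed
  also have "\<dots> = 0" using n by (simp add: sum_subtractf ltp)
  finally show "(\<Sum>t\<in>UNIV. ln (rp M t c)) = 0" .
  show "\<And>t. rp M t c > 0" unfolding rp_def using pos tpp by simp
qed

lemma sqrt_exp: "sqrt (exp (y::real)) = exp (y / 2)"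
proof -
  have "(exp (y / 2))\<^sup>2 = exp y"
    by (simp add: power2_eq_square flip: exp_add)
  then show ?thesis by (rule real_sqrt_unique) simp
qed

theorem lemma3:
  fixes c :: "'a::finite list"
    and M1 M2 :: "'a list \<Rightarrow> 'a \<Rightarrow> real"
    and f :: "real \<Rightarrow> real \<Rightarrow> real"
  assumes "is_LM M1" and "is_LM M2" and "min_bounded f"
  shows "fbar f c M1 M2 \<le> sqrt (MAE c M1 M2)"
proof -
  define a where "a t = rp M1 t c" for t
  define b where "b t = rp M2 t c" for t
  have a0: "\<And>t. a t > 0" and sa: "(\<Sum>t\<in>UNIV. ln (a t)) = 0"
    using sum_ln_rp[OF assms(1)] unfolding a_def by auto
  have b0: "\<And>t. b t > 0" and sb: "(\<Sum>t\<in>UNIV. ln (b t)) = 0"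
    using sum_ln_rp[OF assms(2)] unfolding b_def by auto
  have pa: "\<And>x y. x > 0 \<Longrightarrow> y > 0 \<Longrightarrow> min x y \<le> f x y"
    using assms(3) unfolding min_bounded_def proper_avg_def by auto
  have t1: "ln (inverse (f (a t) (b t))) \<le> - ln (min (a t) (b t))" for t
  proof -
    have m: "min (a t) (b t) > 0" using a0 b0 by simp
    have le: "min (a t) (b t) \<le> f (a t) (b t)" by (rule pa[OF a0 b0])
    have "ln (min (a t) (b t)) \<le> ln (f (a t) (b t))"
      using le m by (subst ln_le_cancel_iff) auto
    moreover have "f (a t) (b t) > 0" using le m by linarith
    ultimately show ?thesis by (simp add: ln_inverse)
  qed
  have t2: "ln (max (a t / b t) (b t / a t)) = ln (a t) + ln (b t) - 2 * ln (min (a t) (b t))" for t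
  proof (cases "a t \<le> b t")
    case True
    have "a t / b t \<le> 1" using True b0[of t] by simp
    moreover have "1 \<le> b t / a t" using True a0[of t] by simp
    ultimately have "max (a t / b t) (b t / a t) = b t / a t" by simp
    then show ?thesis using True a0[of t] b0[of t] by (simp add: ln_div)
  next
    case False
    have "b t / a t \<le> 1" using False a0[of t] by simp
    moreover have "1 \<le> a t / b t" using False b0[of t] by simp
    ultimately have "max (a t / b t) (b t / a t) = a t / b t" by simp
    then show ?thesis using False a0[of t] b0[of t] by (simp add: ln_div)
  qed
  define n where "n = real (card (UNIV::'a set))"
  have n: "n > 0" unfolding n_def by (simp add: card_gt_0_iff)
  have S: "(\<Sum>t\<in>UNIV. ln (inverse (f (a t) (b t)))) \<le> (\<Sum>t\<in>UNIV. ln (max (a t / b t) (b t / a t))) / 2"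
  proof -
    have "(\<Sum>t\<in>UNIV. ln (inverse (f (a t) (b t)))) \<le> (\<Sum>t\<in>UNIV. - ln (min (a t) (b t)))"
      by (rule sum_mono) (rule t1)
    also have "\<dots> = (\<Sum>t\<in>UNIV. ln (max (a t / b t) (b t / a t))) / 2"
    proof -
      have "(\<Sum>t\<in>UNIV. ln (max (a t / b t) (b t / a t)))
          = (\<Sum>t\<in>UNIV. ln (a t)) + (\<Sum>t\<in>UNIV. ln (b t)) - 2 * (\<Sum>t\<in>UNIV. ln (min (a t) (b t)))"
        unfolding t2 sum_subtractf sum.distrib sum_distrib_left ..
      also have "\<dots> = - 2 * (\<Sum>t\<in>UNIV. ln (min (a t) (b t)))" unfolding sa sb by simp
      finally show ?thesis unfolding sum_negf by simp
    qed
    finally show ?thesis .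
  qed
  have "fbar f c M1 M2 = exp ((\<Sum>t\<in>UNIV. ln (inverse (f (a t) (b t)))) / n)"
    unfolding fbar_def GM_def a_def b_def n_def by simp
  also have "\<dots> \<le> exp ((\<Sum>t\<in>UNIV. ln (max (a t / b t) (b t / a t))) / n / 2)"
  proof -
    have "(\<Sum>t\<in>UNIV. ln (inverse (f (a t) (b t)))) / n \<le> ((\<Sum>t\<in>UNIV. ln (max (a t / b t) (b t / a t))) / 2) / n"
      by (rule divide_right_mono[OF S]) (use n in simp)
    then show ?thesis by simp
  qed
  also have "\<dots> = sqrt (exp ((\<Sum>t\<in>UNIV. ln (max (a t / b t) (b t / a t))) / n))"
    by (simp add: sqrt_exp)
  also have "\<dots> = sqrt (MAE c M1 M2)"
    unfolding MAE_def GM_def a_def b_def n_def by simp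
  finally show ?thesis .
qed

end
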